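(* Let $g:\mathbb{R}^n\to\mathbb{R}\cup\{+\infty\}$ be a proper closed convex function and let $f=f_1-f_2$, where $f_1,f_2:\mathbb{R}^n\to\mathbb{R}$ are convex differentiable functions such that $\nabla f_1$ is Lipschitz continuous with modulus $L>0$, $\nabla f_2$ is Lipschitz continuous with modulus $l\ge 0$, and $L\ge l$. Let $F=f+g$, and assume $\inf F>-\infty$ and that this infimum is attained. Let $\mathcal X=\{x:0\in\nabla f(x)+\partial g(x)\}$ be the set of stationary points, and suppose: (a) (error bound) for any $\xi\ge\inf F$ there exist $\epsilon>0$ and $\tau>0$ such that $\operatorname{dist}(x,\mathcal X)\le\tau\|\mathrm{Prox}_{\frac1L g}(x-\tfrac1L\nabla f(x))-x\|$ whenever $\|\mathrm{Prox}_{\frac1L g}(x-\tfrac1L\nabla f(x))-x\|<\epsilon$ and $F(x)\le\xi$; (b) there exists $\delta>0$ such that $\|x-y\|\ge\delta$ whenever $x,y\in\mathcal X$ and $F(x)\ne F(y)$. Let $\{x^k\}$ be generated by Algorithm 1 (described in the context) with $\bar\beta:=\sup_k\beta_k<\sqrt{L/(L+l)}$, and let $\alpha\in\big(\tfrac{L+l}{2}\bar\beta^2,\tfrac L2\big)$. Then: (i) $\lim_{k\to\infty}\operatorname{dist}(x^k,\mathcal X)=0$; (ii) the sequence $\{H_{k,\alpha}\}$ is $Q$-linearly convergent.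
   Context: $\partial g$ denotes the convex subdifferential; $\operatorname{dist}(x,\mathcal X)=\inf_{y\in\mathcal X}\|x-y\|$. For a proper closed convex $h$, $\mathrm{Prox}_h(v)=\arg\min_{x\in\mathbb{R}^n}\{h(x)+\tfrac12\|x-v\|^2\}$. Algorithm 1 (proximal gradient algorithm with extrapolation): choose $x^0\in\operatorname{dom} g$ and $\{\beta_k\}\subseteq[0,\sqrt{L/(L+l)}]$, set $x^{-1}=x^0$, and for $k=0,1,2,\dots$ set $y^k=x^k+\beta_k(x^k-x^{k-1})$ and $x^{k+1}=\mathrm{Prox}_{\frac1L g}\big(y^k-\tfrac1L\nabla f(y^k)\big)$. For $\alpha\ge0$, $H_{k,\alpha}:=F(x^k)+\alpha\|x^k-x^{k-1}\|^2$. A real sequence $\{a_k\}$ converges $Q$-linearly to $a^*$ if there exist $c\in(0,1)$ and $k_0$ such that $|a_{k+1}-a^*|\le c|a_k-a^*|$ for all $k\ge k_0$. *)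

theory Defs
  imports "HOL-Analysis.Analysis"
begin

definition eff_dom :: "('a \<Rightarrow> ereal) \<Rightarrow> 'a set" where
  "eff_dom g = {x. g x < \<infinity>}"

definition proper_fun :: "('a \<Rightarrow> ereal) \<Rightarrow> bool" where
  "proper_fun g \<longleftrightarrow> (\<forall>x. g x \<noteq> -\<infinity>) \<and> (\<exists>x. g x \<noteq> \<infinity>)"

definition epigraph_e :: "('a \<Rightarrow> ereal) \<Rightarrow> ('a \<times> real) set" where
  "epigraph_e g = {(x, r). g x \<le> ereal r}"

definition convex_fun :: "('a::real_vector \<Rightarrow> ereal) \<Rightarrow> bool" where
  "convex_fun g \<longleftrightarrow> convex (epigraph_e g)"

definition closed_fun :: "('a::topological_space \<Rightarrow> ereal) \<Rightarrow> bool" where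
  "closed_fun g \<longleftrightarrow> closed (epigraph_e g)"

definition subdiff :: "('a::real_inner \<Rightarrow> ereal) \<Rightarrow> 'a \<Rightarrow> 'a set" where
  "subdiff g x = {v. g x < \<infinity> \<and> (\<forall>y. g x + ereal (inner v (y - x)) \<le> g y)}"

definition prox :: "('a::real_normed_vector \<Rightarrow> ereal) \<Rightarrow> 'a \<Rightarrow> 'a" where
  "prox h v = (THE x. \<forall>y. h x + ereal ((norm (x - v))\<^sup>2 / 2) \<le> h y + ereal ((norm (y - v))\<^sup>2 / 2))"

definition Q_linear_to :: "(nat \<Rightarrow> real) \<Rightarrow> real \<Rightarrow> bool" where
  "Q_linear_to a a' \<longleftrightarrow> (\<exists>c. 0 < c \<and> c < 1 \<and> (\<exists>k0. \<forall>k\<ge>k0. \<bar>a (Suc k) - a'\<bar> \<le> c * \<bar>a k - a'\<bar>))"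

definition Q_linear_convergent :: "(nat \<Rightarrow> real) \<Rightarrow> bool" where
  "Q_linear_convergent a \<longleftrightarrow> (\<exists>a'. Q_linear_to a a')"

end

theory Submission
  imports Defs
begin

lemma line_deriv:
  fixes f :: "'a::real_inner \<Rightarrow> real"
  assumes "\<And>z. GDERIV f z :> df z"
  shows "((\<lambda>s. f (x + s *\<^sub>R d)) has_field_derivative inner d (df (x + s *\<^sub>R d))) (at s within A)"
proof -
  have l: "((\<lambda>s. x + s *\<^sub>R d) has_derivative (\<lambda>t. t *\<^sub>R d)) (at s within A)"
    by (auto intro!: derivative_eq_intros)
  have g: "(f has_derivative (\<lambda>h. inner h (df (x + s *\<^sub>R d)))) (at (x + s *\<^sub>R d))"
    using assms unfolding gderiv_def by blast
  from has_derivative_compose[OF l g]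
  show ?thesis unfolding has_field_derivative_def
    by (rule has_derivative_eq_rhs) (auto simp: fun_eq_iff inner_commute)
qed

lemma grad_ineq:
  fixes f :: "'a::real_inner \<Rightarrow> real"
  assumes cv: "convex_on UNIV f" and d: "\<And>z. GDERIV f z :> df z"
  shows "f x + inner (df x) (y - x) \<le> f y"
proof -
  define \<psi> where "\<psi> = (\<lambda>s. f (x + s *\<^sub>R (y - x)))"
  have c: "convex_on UNIV \<psi>"
  proof (rule convex_onI)
    fix t a b :: real assume t: "0 < t" "t < 1"
    have e: "x + ((1 - t) *\<^sub>R a + t *\<^sub>R b) *\<^sub>R (y - x) = (1 - t) *\<^sub>R (x + a *\<^sub>R (y - x)) + t *\<^sub>R (x + b *\<^sub>R (y - x))"
      by (simp add: algebra_simps)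
    show "\<psi> ((1 - t) *\<^sub>R a + t *\<^sub>R b) \<le> (1 - t) * \<psi> a + t * \<psi> b"
      unfolding \<psi>_def e using convex_onD[OF cv, of t] t by auto
  qed auto
  have "\<psi> 1 - \<psi> 0 \<ge> inner (y - x) (df (x + 0 *\<^sub>R (y - x))) * (1 - 0)"
    by (rule convex_on_imp_above_tangent[OF c]) (use line_deriv[OF d, of x "y - x" 0 UNIV] in \<open>auto simp: \<psi>_def\<close>)
  then show ?thesis by (simp add: \<psi>_def inner_commute)
qed

lemma descent:
  fixes f :: "'a::real_inner \<Rightarrow> real"
  assumes d: "\<And>z. GDERIV f z :> df z" and lip: "M-lipschitz_on UNIV df"
  shows "f y \<le> f x + inner (df x) (y - x) + M / 2 * (norm (y - x))\<^sup>2"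
proof (cases "y = x")
  case True then show ?thesis by simp
next
  case False
  define dd where "dd = y - x"
  define \<psi> where "\<psi> = (\<lambda>s. f (x + s *\<^sub>R dd) - s * inner (df x) dd - M / 2 * s\<^sup>2 * (norm dd)\<^sup>2)"
  have D: "DERIV \<psi> s :> inner dd (df (x + s *\<^sub>R dd)) - inner (df x) dd - M * s * (norm dd)\<^sup>2" for s
    unfolding \<psi>_def
    using line_deriv[OF d, of x dd s UNIV]
    by (auto intro!: derivative_eq_intros simp: power2_eq_square)
  obtain z where z: "0 < z" "z < 1" "\<psi> 1 - \<psi> 0 = (1 - 0) * (inner dd (df (x + z *\<^sub>R dd)) - inner (df x) dd - M * z * (norm dd)\<^sup>2)"
    using MVT2[of 0 1 \<psi>, OF _ D] by auto
  have "inner dd (df (x + z *\<^sub>R dd)) - inner (df x) dd = inner dd (df (x + z *\<^sub>R dd) - df x)"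
    by (simp add: inner_diff_right inner_commute)
  also have "\<dots> \<le> norm dd * norm (df (x + z *\<^sub>R dd) - df x)"
    by (rule Cauchy_Schwarz_ineq2[THEN order_trans[OF abs_ge_self]])
  also have "\<dots> \<le> norm dd * (M * norm (z *\<^sub>R dd))"
    using lipschitz_on_normD[OF lip, of "x + z *\<^sub>R dd" x] by (intro mult_left_mono) auto
  also have "\<dots> = M * z * (norm dd)\<^sup>2" using z by (simp add: power2_eq_square)
  finally have "\<psi> 1 - \<psi> 0 \<le> 0" using z(3) by simp
  then show ?thesis by (simp add: \<psi>_def dd_def)
qed

lemma norm_comb_identity:
  fixes a b v :: "'a::real_inner"
  shows "(norm ((1 - s) *\<^sub>R a + s *\<^sub>R b - v))\<^sup>2
     = (1 - s) * (norm (a - v))\<^sup>2 + s * (norm (b - v))\<^sup>2 - s * (1 - s) * (norm (a - b))\<^sup>2"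
proof -
  define A where "A = a - v"
  define B where "B = b - v"
  have 1: "(1 - s) *\<^sub>R a + s *\<^sub>R b - v = (1 - s) *\<^sub>R A + s *\<^sub>R B" by (simp add: A_def B_def algebra_simps)
  have 2: "a - b = A - B" by (simp add: A_def B_def)
  have 3: "inner ((1 - s) *\<^sub>R A + s *\<^sub>R B) ((1 - s) *\<^sub>R A + s *\<^sub>R B) = (1 - s)^2 * inner A A + 2 * s * (1 - s) * inner A B + s^2 * inner B B"
    by (simp add: inner_add_left inner_add_right inner_commute[of B A] power2_eq_square algebra_simps)
  have 4: "inner (A - B) (A - B) = inner A A - 2 * inner A B + inner B B"
    by (simp add: inner_diff_left inner_diff_right inner_commute[of B A])
  show ?thesis unfolding 1 2 A_def[symmetric] B_def[symmetric] power2_norm_eq_inner 3 4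
    by (simp add: algebra_simps power2_eq_square)
qed

locale cvx =
  fixes g :: "'a::euclidean_space \<Rightarrow> ereal"
  assumes proper: "proper_fun g" and clsd: "closed_fun g" and cvxg: "convex_fun g"
begin

definition gr :: "'a \<Rightarrow> real" where "gr u = real_of_ereal (g u)"

lemma g_fin: "g u < \<infinity> \<Longrightarrow> g u = ereal (gr u)"
  using proper unfolding proper_fun_def gr_def by (cases "g u") auto

lemma dom_ne: "\<exists>u. g u < \<infinity>"
  using proper unfolding proper_fun_def by (auto simp: less_top)

lemma g_conv:
  assumes "g a < \<infinity>" "g b < \<infinity>" "0 \<le> s" "s \<le> 1"
  shows "g ((1 - s) *\<^sub>R a + s *\<^sub>R b) \<le> ereal ((1 - s) * gr a + s * gr b)"
proof -
  have "(a, gr a) \<in> epigraph_e g" "(b, gr b) \<in> epigraph_e g"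
    using g_fin assms by (auto simp: epigraph_e_def)
  then have "(1 - s) *\<^sub>R (a, gr a) + s *\<^sub>R (b, gr b) \<in> epigraph_e g"
    using cvxg assms unfolding convex_fun_def by (intro convexD_alt) auto
  then show ?thesis by (simp add: epigraph_e_def)
qed

lemma g_closed_seq:
  assumes "u \<longlonglongrightarrow> p" "r \<longlonglongrightarrow> \<rho>" "\<And>n. g (u n) \<le> ereal (r n)"
  shows "g p \<le> ereal \<rho>"
proof -
  have 1: "(\<lambda>n. (u n, r n)) \<longlonglongrightarrow> (p, \<rho>)" using assms(1,2) by (rule tendsto_Pair)
  have 2: "\<And>n. (u n, r n) \<in> epigraph_e g" using assms(3) unfolding epigraph_e_def by simp
  have 3: "closed (epigraph_e g)" using clsd unfolding closed_fun_def .
  have "(p, \<rho>) \<in> epigraph_e g" by (rule closed_sequentially[OF 3 2 1])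
  then show ?thesis by (simp add: epigraph_e_def)
qed

lemma minorant: "\<exists>a c. \<forall>u. ereal (inner a u + c) \<le> g u"
proof -
  obtain u0 where u0: "g u0 < \<infinity>" using dom_ne by blast
  define r0 where "r0 = gr u0"
  have nin: "(u0, r0 - 1) \<notin> epigraph_e g"
    using g_fin[OF u0] by (auto simp: epigraph_e_def r0_def)
  have cv: "convex (epigraph_e g)" using cvxg by (simp add: convex_fun_def)
  have cl: "closed (epigraph_e g)" using clsd by (simp add: closed_fun_def)
  obtain A b where Ab: "inner A (u0, r0 - 1) < b" "\<forall>x\<in>epigraph_e g. inner A x > b"
    using separating_hyperplane_closed_point[OF cv cl nin] by blast
  obtain a1 b1 where A: "A = (a1, b1)" by (cases A)
  have e0: "(u0, r0) \<in> epigraph_e g" using g_fin[OF u0] by (auto simp: epigraph_e_def r0_def)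
  have h1: "inner a1 u0 + b1 * (r0 - 1) < b" using Ab(1) by (simp add: A inner_Pair)
  have h2: "inner a1 u0 + b1 * r0 > b" using Ab(2) e0 by (auto simp: A inner_Pair)
  have b1: "b1 > 0" using h1 h2 by (simp add: algebra_simps)
  show ?thesis
  proof (intro exI allI)
    fix u
    show "ereal (inner (- (1 / b1) *\<^sub>R a1) u + b / b1) \<le> g u"
    proof (cases "g u < \<infinity>")
      case True
      have "(u, gr u) \<in> epigraph_e g" using g_fin[OF True] by (auto simp: epigraph_e_def)
      then have "inner a1 u + b1 * gr u > b" using Ab(2) by (auto simp: A inner_Pair)
      then have "inner (- (1 / b1) *\<^sub>R a1) u + b / b1 \<le> gr u"
        using b1 by (simp add: field_simps)
      then show ?thesis using g_fin[OF True] by simp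
    next
      case False then show ?thesis by (simp add: top.not_eq_extremum)
    qed
  qed
qed

definition phi :: "real \<Rightarrow> 'a \<Rightarrow> 'a \<Rightarrow> real" where
  "phi t v u = t * gr u + (norm (u - v))\<^sup>2 / 2"

lemma phi_conv:
  assumes "g a < \<infinity>" "g b < \<infinity>" "0 \<le> s" "s \<le> 1" "t > 0"
  shows "g ((1 - s) *\<^sub>R a + s *\<^sub>R b) < \<infinity>"
    "phi t v ((1 - s) *\<^sub>R a + s *\<^sub>R b) \<le> (1 - s) * phi t v a + s * phi t v b - s * (1 - s) / 2 * (norm (a - b))\<^sup>2"
proof -
  have G: "g ((1 - s) *\<^sub>R a + s *\<^sub>R b) \<le> ereal ((1 - s) * gr a + s * gr b)" by (rule g_conv[OF assms(1-4)])
  show fin: "g ((1 - s) *\<^sub>R a + s *\<^sub>R b) < \<infinity>" by (rule le_less_trans[OF G]) simp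
  have "gr ((1 - s) *\<^sub>R a + s *\<^sub>R b) \<le> (1 - s) * gr a + s * gr b" using G g_fin[OF fin] by simp
  then have "t * gr ((1 - s) *\<^sub>R a + s *\<^sub>R b) \<le> t * ((1 - s) * gr a + s * gr b)"
    using assms by (intro mult_left_mono) auto
  then show "phi t v ((1 - s) *\<^sub>R a + s *\<^sub>R b) \<le> (1 - s) * phi t v a + s * phi t v b - s * (1 - s) / 2 * (norm (a - b))\<^sup>2"
    unfolding phi_def norm_comb_identity by (simp add: field_simps)
qed

lemma phi_bdd:
  assumes "t > 0"
  shows "\<exists>B. \<forall>u. g u < \<infinity> \<longrightarrow> B \<le> phi t v u"
proof -
  obtain a c where ac: "\<And>u. ereal (inner a u + c) \<le> g u" using minorant by blast
  show ?thesis
  proof (intro exI allI impI)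
    fix u assume u: "g u < \<infinity>"
    have "inner a u + c \<le> gr u" using ac[of u] g_fin[OF u] by simp
    then have 1: "t * (inner a u + c) \<le> t * gr u" using assms by simp
    have 2: "inner a (u - v) \<ge> - (norm a * norm (u - v))"
      using Cauchy_Schwarz_ineq2[of a "u - v"] by linarith
    have 3: "t * (norm a * norm (u - v)) \<le> (t * norm a)\<^sup>2 / 2 + (norm (u - v))\<^sup>2 / 2"
      using sum_squares_bound[of "t * norm a" "norm (u - v)"] by (simp add: power2_eq_square algebra_simps)
    have 4: "t * inner a (u - v) \<ge> - (t * (norm a * norm (u - v)))" using mult_left_mono[OF 2, of t] assms by simp
    have 5: "inner a u = inner a v + inner a (u - v)" by (simp add: inner_diff_right)
    show "t * (inner a v + c) - (t * norm a)\<^sup>2 / 2 \<le> phi t v u"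
      using 1 3 4 unfolding phi_def 5 by (simp add: distrib_left)
  qed
qed

lemma mid_ineq:
  assumes "g a < \<infinity>" "g b < \<infinity>" "t > 0"
  shows "g ((1/2) *\<^sub>R a + (1/2) *\<^sub>R b) < \<infinity>"
    "phi t v ((1/2) *\<^sub>R a + (1/2) *\<^sub>R b) \<le> (phi t v a + phi t v b) / 2 - (norm (a - b))\<^sup>2 / 8"
  using phi_conv(1)[OF assms(1,2), of "1/2" t] phi_conv(2)[OF assms(1,2), of "1/2" t v] assms by (auto simp: add_divide_distrib)

lemma prox_exists:
  assumes t: "t > 0"
  shows "\<exists>p. g p < \<infinity> \<and> (\<forall>u. g u < \<infinity> \<longrightarrow> phi t v p \<le> phi t v u)"
proof -
  obtain B where B: "\<And>u. g u < \<infinity> \<Longrightarrow> B \<le> phi t v u" using phi_bdd[OF t] by blast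
  define S where "S = phi t v ` {u. g u < \<infinity>}"
  define m where "m = Inf S"
  have Sne: "S \<noteq> {}" using dom_ne by (auto simp: S_def)
  have Sb: "bdd_below S" using B by (auto simp: S_def bdd_below_def)
  have mle: "g u < \<infinity> \<Longrightarrow> m \<le> phi t v u" for u
    unfolding m_def using Sb by (intro cInf_lower) (auto simp: S_def)
  have "\<forall>n. \<exists>u. g u < \<infinity> \<and> phi t v u < m + inverse (real (Suc n))"
  proof
    fix n
    have "Inf S < m + inverse (real (Suc n))" by (simp add: m_def)
    then show "\<exists>u. g u < \<infinity> \<and> phi t v u < m + inverse (real (Suc n))"
      using cInf_less_iff[OF Sne Sb] by (auto simp: S_def)
  qed
  then obtain u where u: "\<And>n. g (u n) < \<infinity>" "\<And>n. phi t v (u n) < m + inverse (real (Suc n))"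
    by metis
  have dd: "(norm (u i - u j))\<^sup>2 < 4 * (inverse (real (Suc i)) + inverse (real (Suc j)))" for i j
  proof -
    have "m \<le> phi t v ((1/2) *\<^sub>R u i + (1/2) *\<^sub>R u j)" using mle mid_ineq(1)[OF u(1) u(1) t] by blast
    then show ?thesis using mid_ineq(2)[OF u(1)[of i] u(1)[of j] t, of v] u(2)[of i] u(2)[of j] by argo
  qed
  have "Cauchy u"
  proof (rule metric_CauchyI)
    fix e :: real assume e: "0 < e"
    obtain N :: nat where N: "8 / e\<^sup>2 < real N" using reals_Archimedean2 by blast
    have N': "8 / real (Suc N) < e\<^sup>2"
    proof -
      have "8 < real N * e\<^sup>2" using N e by (simp add: field_simps)
      then have "8 < real (Suc N) * e\<^sup>2" using e by (smt (verit) mult_right_mono of_nat_Suc zero_le_power2)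
      then show ?thesis by (simp add: field_simps)
    qed
    show "\<exists>M. \<forall>i\<ge>M. \<forall>j\<ge>M. dist (u i) (u j) < e"
    proof (intro exI allI impI)
      fix i j assume ij: "N \<le> i" "N \<le> j"
      have "inverse (real (Suc i)) \<le> inverse (real (Suc N))" "inverse (real (Suc j)) \<le> inverse (real (Suc N))"
        using ij by (auto intro!: le_imp_inverse_le)
      then have "4 * (inverse (real (Suc i)) + inverse (real (Suc j))) \<le> 8 * inverse (real (Suc N))" by argo
      then have "(norm (u i - u j))\<^sup>2 < 8 / real (Suc N)" using dd[of i j] by (simp add: divide_inverse)
      then have "(norm (u i - u j))\<^sup>2 < e\<^sup>2" using N' by linarith
      then show "dist (u i) (u j) < e" using e by (simp add: dist_norm power_less_imp_less_base)
    qed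
  qed
  then obtain p where p: "u \<longlonglongrightarrow> p" using Cauchy_convergent_iff convergent_def by blast
  have ph: "(\<lambda>n. phi t v (u n)) \<longlonglongrightarrow> m"
  proof (rule tendsto_sandwich[OF _ _ tendsto_const LIMSEQ_inverse_real_of_nat_add[of m]])
    show "\<forall>\<^sub>F n in sequentially. m \<le> phi t v (u n)" using mle u(1) by auto
    show "\<forall>\<^sub>F n in sequentially. phi t v (u n) \<le> m + inverse (real (Suc n))" by (intro always_eventually allI less_imp_le u(2))
  qed
  have grl: "(\<lambda>n. (phi t v (u n) - (norm (u n - v))\<^sup>2 / 2) / t) \<longlonglongrightarrow> (m - (norm (p - v))\<^sup>2 / 2) / t"
    using t by (auto intro!: tendsto_intros ph p)
  have gle: "g p \<le> ereal ((m - (norm (p - v))\<^sup>2 / 2) / t)"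
  proof (rule g_closed_seq[OF p grl])
    fix n show "g (u n) \<le> ereal ((phi t v (u n) - (norm (u n - v))\<^sup>2 / 2) / t)"
      using g_fin[OF u(1)[of n]] t by (simp add: phi_def)
  qed
  have gp: "g p < \<infinity>" by (rule le_less_trans[OF gle]) simp
  have "gr p \<le> (m - (norm (p - v))\<^sup>2 / 2) / t" using gle g_fin[OF gp] by simp
  then have pm: "phi t v p \<le> m" using t by (simp add: phi_def field_simps)
  have "\<forall>u. g u < \<infinity> \<longrightarrow> phi t v p \<le> phi t v u"
  proof (intro allI impI)
    fix u assume "g u < \<infinity>" then show "phi t v p \<le> phi t v u" using pm mle[of u] by linarith
  qed
  then show ?thesis using gp by blast
qed

lemma prox_min:
  assumes t: "t > 0"
  shows "g (prox (\<lambda>u. ereal t * g u) v) < \<infinity>"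
    "\<And>u. g u < \<infinity> \<Longrightarrow> phi t v (prox (\<lambda>u. ereal t * g u) v) \<le> phi t v u"
proof -
  obtain p where p: "g p < \<infinity>" "\<And>u. g u < \<infinity> \<Longrightarrow> phi t v p \<le> phi t v u"
    using prox_exists[OF t] by blast
  have ev: "ereal t * g u + ereal ((norm (u - v))\<^sup>2 / 2) = ereal (phi t v u)" if "g u < \<infinity>" for u
    using g_fin[OF that] by (simp add: phi_def)
  have ei: "ereal t * g u + ereal ((norm (u - v))\<^sup>2 / 2) = \<infinity>" if "\<not> g u < \<infinity>" for u
    using that t by (simp add: top.not_eq_extremum)
  have "prox (\<lambda>u. ereal t * g u) v = p"
    unfolding prox_def
  proof (rule the_equality)
    show "\<forall>y. ereal t * g p + ereal ((norm (p - v))\<^sup>2 / 2) \<le> ereal t * g y + ereal ((norm (y - v))\<^sup>2 / 2)"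
    proof
      fix y show "ereal t * g p + ereal ((norm (p - v))\<^sup>2 / 2) \<le> ereal t * g y + ereal ((norm (y - v))\<^sup>2 / 2)"
        by (cases "g y < \<infinity>") (use ev ei p in auto)
    qed
  next
    fix x assume x: "\<forall>y. ereal t * g x + ereal ((norm (x - v))\<^sup>2 / 2) \<le> ereal t * g y + ereal ((norm (y - v))\<^sup>2 / 2)"
    have xp: "ereal t * g x + ereal ((norm (x - v))\<^sup>2 / 2) \<le> ereal (phi t v p)" using x ev[OF p(1)] by metis
    have gx: "g x < \<infinity>"
    proof (rule ccontr)
      assume "\<not> g x < \<infinity>" then show False using xp ei by auto
    qed
    have xm: "phi t v x \<le> phi t v u" if "g u < \<infinity>" for u
      using x[rule_format, of u] ev[OF gx] ev[OF that] by simp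
    have "phi t v ((1/2) *\<^sub>R x + (1/2) *\<^sub>R p) \<le> (phi t v x + phi t v p) / 2 - (norm (x - p))\<^sup>2 / 8"
      by (rule mid_ineq(2)[OF gx p(1) t])
    moreover have "phi t v p \<le> phi t v ((1/2) *\<^sub>R x + (1/2) *\<^sub>R p)" by (rule p(2)[OF mid_ineq(1)[OF gx p(1) t]])
    moreover have "phi t v x \<le> phi t v p" "phi t v p \<le> phi t v x" using xm[OF p(1)] p(2)[OF gx] by auto
    ultimately have "(norm (x - p))\<^sup>2 \<le> 0" by argo
    then show "x = p" by simp
  qed
  then show "g (prox (\<lambda>u. ereal t * g u) v) < \<infinity>"
    "\<And>u. g u < \<infinity> \<Longrightarrow> phi t v (prox (\<lambda>u. ereal t * g u) v) \<le> phi t v u" using p by auto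
qed

lemma prox_three:
  assumes t: "t > 0" and y: "g y < \<infinity>"
  shows "phi t v (prox (\<lambda>u. ereal t * g u) v) + (norm (y - prox (\<lambda>u. ereal t * g u) v))\<^sup>2 / 2 \<le> phi t v y"
proof (rule ccontr)
  define p where "p = prox (\<lambda>u. ereal t * g u) v"
  note pm = prox_min[OF t, where v=v, folded p_def]
  define N where "N = (norm (y - p))\<^sup>2"
  assume "\<not> ?thesis"
  then have Dpos: "phi t v p + N / 2 - phi t v y > 0" by (simp add: p_def N_def)
  define D where "D = phi t v p + N / 2 - phi t v y"
  define s where "s = min (1/2) (D / (N + 1))"
  have N0: "N \<ge> 0" by (simp add: N_def)
  have s0: "0 < s" "s \<le> 1" using Dpos N0 by (auto simp: s_def D_def)
  have "phi t v p \<le> phi t v ((1 - s) *\<^sub>R p + s *\<^sub>R y)" using pm(2)[OF phi_conv(1)[OF pm(1) y]] s0 t by auto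
  also have "\<dots> \<le> (1 - s) * phi t v p + s * phi t v y - s * (1 - s) / 2 * N"
    using phi_conv(2)[OF pm(1) y, of s t v] s0 t by (simp add: N_def norm_minus_commute)
  finally have "s * phi t v p \<le> s * (phi t v y - (1 - s) / 2 * N)" by (simp add: algebra_simps)
  then have "s * (phi t v p - (phi t v y - N / 2 + s * N / 2)) \<le> 0" by (simp add: algebra_simps diff_divide_distrib)
  then have 1: "phi t v p \<le> phi t v y - N / 2 + s * N / 2" using s0 by (simp add: mult_le_0_iff)
  have "s * N \<le> D / (N + 1) * N" using N0 by (intro mult_right_mono) (auto simp: s_def)
  also have "\<dots> < D" using Dpos N0 by (simp add: D_def field_simps)
  finally show False using 1 Dpos by (simp add: D_def)
qed

end

lemma norm_shift_expand:
  fixes u y d :: "'a::real_inner"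
  shows "(norm (u - (y - t *\<^sub>R d)))\<^sup>2 = (norm (u - y))\<^sup>2 + 2 * t * inner d (u - y) + t\<^sup>2 * (norm d)\<^sup>2"
proof -
  have "u - (y - t *\<^sub>R d) = (u - y) + t *\<^sub>R d" by simp
  then show ?thesis unfolding power2_norm_eq_inner
    by (simp add: inner_add_left inner_add_right inner_commute algebra_simps power2_eq_square)
qed

locale alg = cvx g for g :: "'a::euclidean_space \<Rightarrow> ereal" +
  fixes f1 f2 :: "'a \<Rightarrow> real" and df1 df2 :: "'a \<Rightarrow> 'a" and L l :: real
  assumes f1c: "convex_on UNIV f1" and f2c: "convex_on UNIV f2"
    and d1: "\<And>z. GDERIV f1 z :> df1 z" and d2: "\<And>z. GDERIV f2 z :> df2 z"
    and Lpos: "L > 0" and lnn: "l \<ge> 0"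
    and lip1: "L-lipschitz_on UNIV df1" and lip2: "l-lipschitz_on UNIV df2"
begin

definition f where "f z = f1 z - f2 z"
definition df where "df z = df1 z - df2 z"
definition Fr where "Fr z = f z + gr z"
definition T where "T z = prox (\<lambda>u. ereal (1 / L) * g u) (z - (1 / L) *\<^sub>R (df1 z - df2 z))"

lemma f_upper: "f w \<le> f y + inner (df y) (w - y) + L / 2 * (norm (w - y))\<^sup>2"
  using descent[OF d1 lip1, of w y] grad_ineq[OF f2c d2, of y w]
  by (simp add: f_def df_def inner_diff_left)

lemma f_lower: "f w \<ge> f y + inner (df y) (w - y) - l / 2 * (norm (w - y))\<^sup>2"
  using descent[OF d2 lip2, of w y] grad_ineq[OF f1c d1, of y w]
  by (simp add: f_def df_def inner_diff_left)

lemma T_dom: "g (T y) < \<infinity>"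
  unfolding T_def using prox_min(1) Lpos by simp

lemma K:
  assumes w: "g w < \<infinity>"
  shows "Fr (T y) + L / 2 * (norm (w - T y))\<^sup>2 \<le> Fr w + (L + l) / 2 * (norm (w - y))\<^sup>2"
proof -
  define t where "t = 1 / L"
  define p where "p = T y"
  have t: "t > 0" using Lpos by (simp add: t_def)
  have pd: "p = prox (\<lambda>u. ereal t * g u) (y - t *\<^sub>R df y)"
    by (simp add: p_def T_def t_def df_def)
  have tp: "phi t (y - t *\<^sub>R df y) p + (norm (w - p))\<^sup>2 / 2 \<le> phi t (y - t *\<^sub>R df y) w"
    unfolding pd by (rule prox_three[OF t w])
  then have "t * gr p + ((norm (p - y))\<^sup>2 + 2 * t * inner (df y) (p - y)) / 2 + (norm (w - p))\<^sup>2 / 2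
      \<le> t * gr w + ((norm (w - y))\<^sup>2 + 2 * t * inner (df y) (w - y)) / 2"
    unfolding phi_def norm_shift_expand by (simp add: field_simps)
  moreover have "t * (gr p + L / 2 * (norm (p - y))\<^sup>2 + inner (df y) (p - y) + L / 2 * (norm (w - p))\<^sup>2)
      = t * gr p + ((norm (p - y))\<^sup>2 + 2 * t * inner (df y) (p - y)) / 2 + (norm (w - p))\<^sup>2 / 2"
    using Lpos by (simp add: t_def field_simps)
  moreover have "t * (gr w + L / 2 * (norm (w - y))\<^sup>2 + inner (df y) (w - y))
      = t * gr w + ((norm (w - y))\<^sup>2 + 2 * t * inner (df y) (w - y)) / 2"
    using Lpos by (simp add: t_def field_simps)
  ultimately have 1: "gr p + L / 2 * (norm (p - y))\<^sup>2 + inner (df y) (p - y) + L / 2 * (norm (w - p))\<^sup>2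
      \<le> gr w + L / 2 * (norm (w - y))\<^sup>2 + inner (df y) (w - y)"
    using t by (metis mult_left_le_imp_le)
  have 2: "f p \<le> f y + inner (df y) (p - y) + L / 2 * (norm (p - y))\<^sup>2" by (rule f_upper)
  have 3: "f w \<ge> f y + inner (df y) (w - y) - l / 2 * (norm (w - y))\<^sup>2" by (rule f_lower)
  show ?thesis using 1 2 3 unfolding p_def[symmetric] Fr_def
    by (simp add: algebra_simps add_divide_distrib inner_diff_right)
qed

definition Xs where "Xs = {z. \<exists>v\<in>subdiff g z. (df1 z - df2 z) + v = 0}"

lemma Xs_sub:
  assumes "z \<in> Xs"
  shows "g z < \<infinity>" "\<And>u. g z + ereal (inner (- df z) (u - z)) \<le> g u"
proof -
  obtain v where v: "v \<in> subdiff g z" "(df1 z - df2 z) + v = 0" using assms by (auto simp: Xs_def)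
  then have "v = - df z" using v(2) by (simp add: df_def add_eq_0_iff)
  then show "g z < \<infinity>" "\<And>u. g z + ereal (inner (- df z) (u - z)) \<le> g u"
    using v(1) by (auto simp: subdiff_def)
qed

lemma S_lower:
  assumes z: "z \<in> Xs" and u: "g u < \<infinity>"
  shows "Fr u \<ge> Fr z - l / 2 * (norm (u - z))\<^sup>2"
proof -
  have "g z + ereal (inner (- df z) (u - z)) \<le> g u" by (rule Xs_sub(2)[OF z])
  then have "gr z + inner (- df z) (u - z) \<le> gr u"
    using g_fin[OF Xs_sub(1)[OF z]] g_fin[OF u] by (metis plus_ereal.simps(1) ereal_less_eq(3))
  moreover have "f u \<ge> f z + inner (df z) (u - z) - l / 2 * (norm (u - z))\<^sup>2" by (rule f_lower)
  ultimately show ?thesis unfolding Fr_def by simp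
qed

lemma prox_firm:
  assumes t: "t > 0"
  shows "norm (prox (\<lambda>u. ereal t * g u) v1 - prox (\<lambda>u. ereal t * g u) v2) \<le> norm (v1 - v2)"
proof -
  define p where "p = prox (\<lambda>u. ereal t * g u) v1"
  define q where "q = prox (\<lambda>u. ereal t * g u) v2"
  have gp: "g p < \<infinity>" and gq: "g q < \<infinity>" using prox_min(1)[OF t] by (auto simp: p_def q_def)
  have 1: "phi t v1 p + (norm (q - p))\<^sup>2 / 2 \<le> phi t v1 q" unfolding p_def by (rule prox_three[OF t gq])
  have 2: "phi t v2 q + (norm (p - q))\<^sup>2 / 2 \<le> phi t v2 p" unfolding q_def by (rule prox_three[OF t gp])
  have id: "(norm (q - v1))\<^sup>2 + (norm (p - v2))\<^sup>2 - (norm (p - v1))\<^sup>2 - (norm (q - v2))\<^sup>2 = 2 * inner (p - q) (v1 - v2)"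
    unfolding power2_norm_eq_inner
    by (simp add: inner_diff_left inner_diff_right inner_commute algebra_simps)
  have "(norm (p - q))\<^sup>2 \<le> inner (p - q) (v1 - v2)"
    using 1 2 id unfolding phi_def by (simp add: norm_minus_commute[of q p] field_simps)
  also have "\<dots> \<le> norm (p - q) * norm (v1 - v2)" by (rule norm_cauchy_schwarz)
  finally have 3: "norm (p - q) * norm (p - q) \<le> norm (p - q) * norm (v1 - v2)" by (simp add: power2_eq_square)
  show ?thesis
  proof (cases "norm (p - q) = 0")
    case True then show ?thesis by (simp add: p_def q_def)
  next
    case False then show ?thesis using 3 by (simp add: p_def q_def)
  qed
qed

lemma df_lip: "norm (df a - df b) \<le> (L + l) * norm (a - b)"
proof -
  have "norm (df a - df b) = norm ((df1 a - df1 b) - (df2 a - df2 b))" by (simp add: df_def algebra_simps)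
  also have "\<dots> \<le> norm (df1 a - df1 b) + norm (df2 a - df2 b)" by (rule norm_triangle_ineq4)
  also have "\<dots> \<le> L * norm (a - b) + l * norm (a - b)"
    using lipschitz_on_normD[OF lip1, of a b] lipschitz_on_normD[OF lip2, of a b] by auto
  finally show ?thesis by (simp add: algebra_simps)
qed

lemma T_lip: "norm (T a - T b) \<le> (2 + l / L) * norm (a - b)"
proof -
  have t: "1 / L > 0" using Lpos by simp
  have "norm (T a - T b) \<le> norm ((a - (1 / L) *\<^sub>R df a) - (b - (1 / L) *\<^sub>R df b))"
    unfolding T_def df_def[symmetric] by (rule prox_firm[OF t])
  also have "\<dots> = norm ((a - b) - (1 / L) *\<^sub>R (df a - df b))" by (simp add: algebra_simps)
  also have "\<dots> \<le> norm (a - b) + norm ((1 / L) *\<^sub>R (df a - df b))" by (rule norm_triangle_ineq4)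
  also have "\<dots> \<le> norm (a - b) + (1 / L) * ((L + l) * norm (a - b))"
    using df_lip[of a b] Lpos by (simp add: divide_right_mono)
  also have "\<dots> = (2 + l / L) * norm (a - b)" using Lpos by (simp add: field_simps)
  finally show ?thesis .
qed

lemma df_cont: "continuous_on UNIV df"
proof -
  have "(L + l)-lipschitz_on UNIV df"
    by (rule lipschitz_onI) (use df_lip Lpos lnn in \<open>auto simp: dist_norm\<close>)
  then show ?thesis by (rule lipschitz_on_continuous_on)
qed

lemma Xs_closed: "closed Xs"
  unfolding closed_sequential_limits
proof (intro allI impI, elim conjE)
  fix z and p assume zs: "\<forall>n. z n \<in> Xs" and zp: "z \<longlonglongrightarrow> p"
  have dfz: "(\<lambda>n. df (z n)) \<longlonglongrightarrow> df p"
    by (rule continuous_on_tendsto_compose[OF df_cont zp]) auto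
  have le: "g p \<le> ereal (gr u + inner (df p) (u - p))" if u: "g u < \<infinity>" for u
  proof (rule g_closed_seq[OF zp])
    show "(\<lambda>n. gr u + inner (df (z n)) (u - z n)) \<longlonglongrightarrow> gr u + inner (df p) (u - p)"
      by (intro tendsto_intros dfz zp)
    fix n
    have zn: "z n \<in> Xs" using zs by blast
    have "g (z n) + ereal (inner (- df (z n)) (u - z n)) \<le> g u" by (rule Xs_sub(2)[OF zn])
    then have "gr (z n) + inner (- df (z n)) (u - z n) \<le> gr u"
      using g_fin[OF Xs_sub(1)[OF zn]] g_fin[OF u] by (metis plus_ereal.simps(1) ereal_less_eq(3))
    then show "g (z n) \<le> ereal (gr u + inner (df (z n)) (u - z n))"
      using g_fin[OF Xs_sub(1)[OF zn]] by simp
  qed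
  obtain u0 where u0: "g u0 < \<infinity>" using dom_ne by blast
  have gp: "g p < \<infinity>" by (rule le_less_trans[OF le[OF u0]]) simp
  have "- df p \<in> subdiff g p"
    unfolding subdiff_def
  proof (safe intro!: gp)
    fix u show "g p + ereal (inner (- df p) (u - p)) \<le> g u"
    proof (cases "g u < \<infinity>")
      case True
      then show ?thesis using le[OF True] g_fin[OF True] g_fin[OF gp] by simp
    next
      case False then show ?thesis by (simp add: top.not_eq_extremum)
    qed
  qed
  then show "p \<in> Xs" unfolding Xs_def by (intro CollectI bexI[where x="- df p"]) (auto simp: df_def)
qed

lemma min_in_Xs:
  assumes zmin: "\<forall>w. ereal (f1 z - f2 z) + g z \<le> ereal (f1 w - f2 w) + g w"
  shows "z \<in> Xs"
proof -
  obtain u0 where u0: "g u0 < \<infinity>" using dom_ne by blast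
  have gz: "g z < \<infinity>"
  proof (rule ccontr)
    assume "\<not> g z < \<infinity>"
    then have "g z = \<infinity>" by (simp add: top.not_eq_extremum)
    then show False using zmin[rule_format, of u0] g_fin[OF u0] by simp
  qed
  have Fz: "Fr z \<le> Fr w" if "g w < \<infinity>" for w
    using zmin[rule_format, of w] g_fin[OF gz] g_fin[OF that] by (simp add: Fr_def f_def)
  have Q: "0 \<le> inner (df z) (u - z) + gr u - gr z" if u: "g u < \<infinity>" for u
  proof (rule ccontr)
    define Q where "Q = inner (df z) (u - z) + gr u - gr z"
    define N where "N = (norm (u - z))\<^sup>2"
    assume "\<not> 0 \<le> inner (df z) (u - z) + gr u - gr z"
    then have Qn: "Q < 0" by (simp add: Q_def)
    have N0: "N \<ge> 0" by (simp add: N_def)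
    define s where "s = min 1 (- Q / (L * N + 1))"
    have LN: "L * N \<ge> 0" using Lpos N0 by simp
    have s0: "0 < s" "s \<le> 1" using Qn LN divide_neg_pos[of Q "L * N + 1"] by (auto simp: s_def)
    define w where "w = (1 - s) *\<^sub>R z + s *\<^sub>R u"
    have gw: "g w \<le> ereal ((1 - s) * gr z + s * gr u)" unfolding w_def by (rule g_conv[OF gz u]) (use s0 in auto)
    have gwf: "g w < \<infinity>" by (rule le_less_trans[OF gw]) simp
    have wz: "w - z = s *\<^sub>R (u - z)" by (simp add: w_def algebra_simps)
    have nw: "(norm (w - z))\<^sup>2 = s\<^sup>2 * N" using s0 by (simp add: wz N_def power_mult_distrib)
    have iw: "inner (df z) (w - z) = s * inner (df z) (u - z)" by (simp add: wz)
    have "Fr z \<le> Fr w" by (rule Fz[OF gwf])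
    also have "\<dots> \<le> f z + inner (df z) (w - z) + L / 2 * (norm (w - z))\<^sup>2 + ((1 - s) * gr z + s * gr u)"
      using f_upper[of w z] gw g_fin[OF gwf] by (simp add: Fr_def)
    also have "\<dots> = Fr z + s * (Q + L / 2 * s * N)"
      unfolding nw iw by (simp add: Fr_def Q_def algebra_simps power2_eq_square)
    finally have 1: "0 \<le> Q + L / 2 * s * N" using s0 by (simp add: zero_le_mult_iff)
    have "L / 2 * s * N \<le> L / 2 * (- Q / (L * N + 1)) * N"
      using Lpos N0 by (intro mult_right_mono mult_left_mono) (auto simp: s_def)
    also have "\<dots> < - Q" using Qn LN mult_nonneg_nonpos[OF LN, of Q] by (simp add: field_simps)
    finally show False using 1 by simp
  qed
  have "- df z \<in> subdiff g z"
    unfolding subdiff_def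
  proof (safe intro!: gz)
    fix u show "g z + ereal (inner (- df z) (u - z)) \<le> g u"
    proof (cases "g u < \<infinity>")
      case True
      then show ?thesis using Q[OF True] g_fin[OF True] g_fin[OF gz] by simp
    next
      case False then show ?thesis by (simp add: top.not_eq_extremum)
    qed
  qed
  then show "z \<in> Xs" unfolding Xs_def by (intro CollectI bexI[where x="- df z"]) (auto simp: df_def)
qed

end

locale algseq = alg g f1 f2 df1 df2 L l for g :: "'a::euclidean_space \<Rightarrow> ereal" and f1 f2 df1 df2 L l +
  fixes \<beta> :: "nat \<Rightarrow> real" and x :: "nat \<Rightarrow> 'a" and \<alpha> :: real
  assumes x0: "g (x 0) < \<infinity>"
    and beta: "\<And>k. 0 \<le> \<beta> k \<and> \<beta> k \<le> sqrt (L / (L + l))"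
    and iter: "\<And>k. x (Suc k) = T (x k + \<beta> k *\<^sub>R (x k - (if k = 0 then x 0 else x (k - 1))))"
    and alpha: "(L + l) / 2 * (SUP k. \<beta> k)\<^sup>2 < \<alpha>" "\<alpha> < L / 2"
    and zmin: "\<exists>z. \<forall>w. ereal (f1 z - f2 z) + g z \<le> ereal (f1 w - f2 w) + g w"
    and errb: "\<forall>\<xi>::real. ereal \<xi> \<ge> (INF z. ereal (f1 z - f2 z) + g z) \<longrightarrow>
        (\<exists>\<epsilon>>0. \<exists>\<tau>>0. \<forall>z. norm (T z - z) < \<epsilon> \<and> ereal (f1 z - f2 z) + g z \<le> ereal \<xi> \<longrightarrow>
            infdist z Xs \<le> \<tau> * norm (T z - z))"
    and sep: "\<exists>\<delta>>0. \<forall>u\<in>Xs. \<forall>v\<in>Xs. ereal (f1 u - f2 u) + g u \<noteq> ereal (f1 v - f2 v) + g v \<longrightarrow> dist u v \<ge> \<delta>"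
begin

definition xp where "xp k = (if k = 0 then x 0 else x (k - 1))"
definition Dl where "Dl k = norm (x k - xp k)"
definition y where "y k = x k + \<beta> k *\<^sub>R (x k - xp k)"
definition bb where "bb = (SUP k. \<beta> k)"
definition Hs where "Hs k = Fr (x k) + \<alpha> * (Dl k)\<^sup>2"

lemma xs: "x (Suc k) = T (y k)" using iter[of k] by (simp add: y_def xp_def)
lemma xp_Suc: "xp (Suc k) = x k" by (simp add: xp_def)
lemma Dl_Suc: "Dl (Suc k) = norm (x (Suc k) - x k)" by (simp add: Dl_def xp_def)
lemma Dl0: "Dl 0 = 0" by (simp add: Dl_def xp_def)
lemma Dl_nn: "Dl k \<ge> 0" by (simp add: Dl_def)

lemma bdd: "bdd_above (range \<beta>)"
  using beta by (auto simp: bdd_above_def)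
lemma beta_le: "\<beta> k \<le> bb" unfolding bb_def by (rule cSUP_upper[OF _ bdd]) simp
lemma bb_nn: "bb \<ge> 0" using beta[of 0] beta_le[of 0] by linarith
lemma beta_sq: "(\<beta> k)\<^sup>2 \<le> bb\<^sup>2" using beta[of k] beta_le[of k] by (intro power_mono) auto

lemma dom: "g (x k) < \<infinity>"
proof (cases k)
  case 0 then show ?thesis using x0 by simp
next
  case (Suc j) then show ?thesis using T_dom xs by simp
qed

definition a0 where "a0 = \<alpha> - (L + l) / 2 * bb\<^sup>2"
definition b0 where "b0 = L / 2 - \<alpha>"
lemma a0: "a0 > 0" using alpha(1) by (simp add: a0_def bb_def)
lemma b0: "b0 > 0" using alpha(2) by (simp add: b0_def)

lemma xy: "norm (x k - y k) = \<beta> k * Dl k"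
  using beta[of k] by (simp add: y_def Dl_def)

lemma descent_H: "Hs (Suc k) + a0 * (Dl k)\<^sup>2 + b0 * (Dl (Suc k))\<^sup>2 \<le> Hs k"
proof -
  have "Fr (T (y k)) + L / 2 * (norm (x k - T (y k)))\<^sup>2 \<le> Fr (x k) + (L + l) / 2 * (norm (x k - y k))\<^sup>2"
    by (rule K[OF dom])
  then have 1: "Fr (x (Suc k)) + L / 2 * (Dl (Suc k))\<^sup>2 \<le> Fr (x k) + (L + l) / 2 * ((\<beta> k)\<^sup>2 * (Dl k)\<^sup>2)"
    unfolding xs[symmetric] xy Dl_Suc by (simp add: norm_minus_commute power_mult_distrib)
  have "(\<beta> k)\<^sup>2 * (Dl k)\<^sup>2 \<le> bb\<^sup>2 * (Dl k)\<^sup>2" using beta_sq by (intro mult_right_mono) auto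
  then have 2: "(L + l) / 2 * ((\<beta> k)\<^sup>2 * (Dl k)\<^sup>2) \<le> (L + l) / 2 * (bb\<^sup>2 * (Dl k)\<^sup>2)"
    using Lpos lnn by (intro mult_left_mono) auto
  have 3: "Hs (Suc k) + a0 * (Dl k)\<^sup>2 + b0 * (Dl (Suc k))\<^sup>2
      = Fr (x (Suc k)) + L / 2 * (Dl (Suc k))\<^sup>2 + \<alpha> * (Dl k)\<^sup>2 - (L + l) / 2 * (bb\<^sup>2 * (Dl k)\<^sup>2)"
    by (simp add: Hs_def a0_def b0_def xp_Suc Dl_Suc algebra_simps)
  have 4: "Hs k = Fr (x k) + \<alpha> * (Dl k)\<^sup>2" by (simp add: Hs_def)
  show ?thesis unfolding 3 4 using 1 2 by linarith
qed

lemma H_dec: "decseq Hs"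
  using descent_H a0 b0 by (intro decseq_SucI) (smt (verit) mult_nonneg_nonneg zero_le_power2)

lemma Fe_x: "ereal (f1 (x k) - f2 (x k)) + g (x k) = ereal (Fr (x k))"
  using g_fin[OF dom[of k]] by (simp add: Fr_def f_def)

lemma Fr_lb: "\<exists>B. \<forall>k. B \<le> Fr (x k)"
proof -
  obtain z where z: "\<forall>w. ereal (f1 z - f2 z) + g z \<le> ereal (f1 w - f2 w) + g w" using zmin by blast
  have zX: "z \<in> Xs" by (rule min_in_Xs[OF z])
  have gz: "g z < \<infinity>" by (rule Xs_sub(1)[OF zX])
  have "Fr z \<le> Fr (x k)" for k
  proof -
    have "ereal (f1 z - f2 z) + g z \<le> ereal (f1 (x k) - f2 (x k)) + g (x k)" using z by blast
    then show ?thesis unfolding Fe_x using g_fin[OF gz] by (simp add: Fr_def f_def)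
  qed
  then show ?thesis by blast
qed

lemma alpha_nn: "\<alpha> \<ge> 0" using a0 bb_nn Lpos lnn by (simp add: a0_def) (smt (verit) mult_nonneg_nonneg zero_le_power2 divide_nonneg_pos)

lemma H_lim: obtains \<zeta> where "Hs \<longlonglongrightarrow> \<zeta>" "\<And>k. \<zeta> \<le> Hs k"
proof -
  obtain B where B: "\<And>k. B \<le> Fr (x k)" using Fr_lb by blast
  have "\<forall>k. B \<le> Hs k"
  proof
    fix k have "0 \<le> \<alpha> * (Dl k)\<^sup>2" using alpha_nn by simp
    then show "B \<le> Hs k" using B[of k] by (simp add: Hs_def)
  qed
  then obtain \<zeta> where "Hs \<longlonglongrightarrow> \<zeta>" "\<forall>i. \<zeta> \<le> Hs i" using decseq_convergent[OF H_dec] by blast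
  then show ?thesis using that by blast
qed

lemma Dl_lim: "Dl \<longlonglongrightarrow> 0"
proof -
  obtain \<zeta> where H: "Hs \<longlonglongrightarrow> \<zeta>" by (rule H_lim)
  have d: "(\<lambda>k. (Hs k - Hs (Suc k)) / b0) \<longlonglongrightarrow> (\<zeta> - \<zeta>) / b0"
    by (intro tendsto_intros H LIMSEQ_Suc[OF H]) (use b0 in simp)
  have up: "(Dl (Suc k))\<^sup>2 \<le> (Hs k - Hs (Suc k)) / b0" for k
  proof -
    have "0 \<le> a0 * (Dl k)\<^sup>2" using a0 by simp
    then have "b0 * (Dl (Suc k))\<^sup>2 \<le> Hs k - Hs (Suc k)" using descent_H[of k] by linarith
    then show ?thesis using b0 by (simp add: field_simps)
  qed
  have "(\<lambda>k. (Dl (Suc k))\<^sup>2) \<longlonglongrightarrow> 0"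
  proof (rule tendsto_sandwich[OF _ _ tendsto_const])
    show "\<forall>\<^sub>F n in sequentially. 0 \<le> (Dl (Suc n))\<^sup>2" by simp
    show "\<forall>\<^sub>F n in sequentially. (Dl (Suc n))\<^sup>2 \<le> (Hs n - Hs (Suc n)) / b0" by (intro always_eventually allI up)
    show "(\<lambda>k. (Hs k - Hs (Suc k)) / b0) \<longlonglongrightarrow> 0" using d by simp
  qed
  then have "(\<lambda>k. sqrt ((Dl (Suc k))\<^sup>2)) \<longlonglongrightarrow> sqrt 0" by (rule tendsto_real_sqrt)
  then have "(\<lambda>k. Dl (Suc k)) \<longlonglongrightarrow> 0" using Dl_nn by simp
  then show ?thesis by (rule LIMSEQ_imp_Suc)
qed

definition cT where "cT = 2 + l / L"
lemma cT_nn: "cT \<ge> 0" using Lpos lnn by (simp add: cT_def)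

lemma r_bound: "norm (T (x k) - x k) \<le> cT * bb * Dl k + Dl (Suc k)"
proof -
  have "T (x k) - x k = (T (x k) - T (y k)) + (x (Suc k) - x k)" by (simp add: xs)
  then have "norm (T (x k) - x k) \<le> norm (T (x k) - T (y k)) + norm (x (Suc k) - x k)"
    by (metis norm_triangle_ineq)
  also have "norm (T (x k) - T (y k)) \<le> cT * norm (x k - y k)" unfolding cT_def by (rule T_lip)
  also have "norm (x k - y k) = \<beta> k * Dl k" by (rule xy)
  also have "cT * (\<beta> k * Dl k) \<le> cT * (bb * Dl k)"
    using beta_le[of k] Dl_nn[of k] cT_nn by (intro mult_left_mono mult_right_mono) auto
  finally show ?thesis by (simp add: Dl_Suc mult.assoc)
qed

lemma r_lim: "(\<lambda>k. norm (T (x k) - x k)) \<longlonglongrightarrow> 0"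
proof (rule tendsto_sandwich[OF _ _ tendsto_const])
  show "\<forall>\<^sub>F n in sequentially. 0 \<le> norm (T (x n) - x n)" by simp
  show "\<forall>\<^sub>F n in sequentially. norm (T (x n) - x n) \<le> cT * bb * Dl n + Dl (Suc n)"
    by (intro always_eventually allI r_bound)
  have "(\<lambda>n. cT * bb * Dl n + Dl (Suc n)) \<longlonglongrightarrow> cT * bb * 0 + 0"
    by (intro tendsto_intros Dl_lim LIMSEQ_Suc[OF Dl_lim])
  then show "(\<lambda>n. cT * bb * Dl n + Dl (Suc n)) \<longlonglongrightarrow> 0" by simp
qed

lemma Fr_le_H0: "Fr (x k) \<le> Hs 0"
proof -
  have "Fr (x k) \<le> Hs k" using alpha_nn by (simp add: Hs_def)
  also have "Hs k \<le> Hs 0" using H_dec by (rule decseqD) simp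
  finally show ?thesis .
qed

lemma errb_x: obtains \<epsilon> \<tau> where "\<epsilon> > 0" "\<tau> > 0"
  "\<And>k. norm (T (x k) - x k) < \<epsilon> \<Longrightarrow> infdist (x k) Xs \<le> \<tau> * norm (T (x k) - x k)"
proof -
  have "(INF z. ereal (f1 z - f2 z) + g z) \<le> ereal (f1 (x 0) - f2 (x 0)) + g (x 0)" by (rule INF_lower) simp
  also have "\<dots> = ereal (Hs 0)" unfolding Fe_x by (simp add: Hs_def Dl0)
  finally obtain \<epsilon> \<tau> where e: "\<epsilon> > 0" "\<tau> > 0" and
    eb: "\<And>z. norm (T z - z) < \<epsilon> \<and> ereal (f1 z - f2 z) + g z \<le> ereal (Hs 0) \<Longrightarrow> infdist z Xs \<le> \<tau> * norm (T z - z)"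
    using errb by blast
  show ?thesis
  proof (rule that[OF e])
    fix k assume "norm (T (x k) - x k) < \<epsilon>"
    moreover have "ereal (f1 (x k) - f2 (x k)) + g (x k) \<le> ereal (Hs 0)" unfolding Fe_x using Fr_le_H0 by simp
    ultimately show "infdist (x k) Xs \<le> \<tau> * norm (T (x k) - x k)" using eb by blast
  qed
qed

lemma part1: "(\<lambda>k. infdist (x k) Xs) \<longlonglongrightarrow> 0"
proof -
  obtain \<epsilon> \<tau> where e: "\<epsilon> > 0" "\<tau> > 0"
    and eb: "\<And>k. norm (T (x k) - x k) < \<epsilon> \<Longrightarrow> infdist (x k) Xs \<le> \<tau> * norm (T (x k) - x k)"
    by (rule errb_x) blast
  have ev: "\<forall>\<^sub>F k in sequentially. norm (T (x k) - x k) < \<epsilon>"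
    using r_lim e(1) by (rule order_tendstoD)
  show ?thesis
  proof (rule tendsto_sandwich[OF _ _ tendsto_const])
    show "\<forall>\<^sub>F n in sequentially. 0 \<le> infdist (x n) Xs" by (simp add: infdist_nonneg)
    show "\<forall>\<^sub>F n in sequentially. infdist (x n) Xs \<le> \<tau> * norm (T (x n) - x n)"
      using ev by eventually_elim (rule eb)
    have "(\<lambda>n. \<tau> * norm (T (x n) - x n)) \<longlonglongrightarrow> \<tau> * 0" by (intro tendsto_intros r_lim)
    then show "(\<lambda>n. \<tau> * norm (T (x n) - x n)) \<longlonglongrightarrow> 0" by simp
  qed
qed

lemma Xs_ne: "Xs \<noteq> {}"
  using zmin min_in_Xs by blast

definition dd where "dd k = infdist (x k) Xs"

lemma proj_ex: "\<exists>pr. \<forall>k. pr k \<in> Xs \<and> dist (x k) (pr k) = dd k"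
proof -
  have "\<forall>k. \<exists>u. u \<in> Xs \<and> dist (x k) u = dd k"
  proof
    fix k
    obtain u where "u \<in> Xs" "infdist (x k) Xs = dist (x k) u"
      using infdist_attains_inf[OF Xs_closed Xs_ne] by blast
    then show "\<exists>u. u \<in> Xs \<and> dist (x k) u = dd k" by (auto simp: dd_def)
  qed
  then show ?thesis by (rule choice)
qed

lemma FeX: "u \<in> Xs \<Longrightarrow> ereal (f1 u - f2 u) + g u = ereal (Fr u)"
  using g_fin[OF Xs_sub(1)] by (simp add: Fr_def f_def)

lemma dd_nn: "dd k \<ge> 0" by (simp add: dd_def infdist_nonneg)

lemma part2: "Q_linear_convergent Hs"
proof -
  obtain pr where pr: "\<And>k. pr k \<in> Xs" "\<And>k. dist (x k) (pr k) = dd k" using proj_ex by blast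
  obtain \<delta> where \<delta>: "\<delta> > 0" and sepd: "\<And>u v. u \<in> Xs \<Longrightarrow> v \<in> Xs \<Longrightarrow> ereal (f1 u - f2 u) + g u \<noteq> ereal (f1 v - f2 v) + g v \<Longrightarrow> dist u v \<ge> \<delta>"
    using sep by blast
  obtain \<zeta> where Hl: "Hs \<longlonglongrightarrow> \<zeta>" and Hge: "\<And>k. \<zeta> \<le> Hs k" by (rule H_lim) blast
  have ddl: "dd \<longlonglongrightarrow> 0" using part1 by (simp add: dd_def[abs_def])
  have ev1: "\<forall>\<^sub>F k in sequentially. dd k < \<delta> / 4" using ddl \<delta> by (intro order_tendstoD) auto
  have ev2: "\<forall>\<^sub>F k in sequentially. Dl k < \<delta> / 4" using Dl_lim \<delta> by (intro order_tendstoD) auto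
  obtain K0 where K0: "\<And>k. k \<ge> K0 \<Longrightarrow> dd k < \<delta> / 4 \<and> Dl k < \<delta> / 4"
    using eventually_conj[OF ev1 ev2] unfolding eventually_sequentially by blast
  define zt where "zt = Fr (pr K0)"
  have Fpr: "Fr (pr k) = zt" if "k \<ge> K0" for k
    using that
  proof (induction k rule: dec_induct)
    case base then show ?case by (simp add: zt_def)
  next
    case (step k)
    have "dist (pr k) (pr (Suc k)) \<le> dist (pr k) (x k) + dist (x k) (pr (Suc k))" by (rule dist_triangle)
    also have "dist (x k) (pr (Suc k)) \<le> dist (x k) (x (Suc k)) + dist (x (Suc k)) (pr (Suc k))" by (rule dist_triangle)
    finally have "dist (pr k) (pr (Suc k)) \<le> dd k + Dl (Suc k) + dd (Suc k)"
      using pr(2)[of k] pr(2)[of "Suc k"] by (simp add: dist_commute Dl_Suc dist_norm norm_minus_commute)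
    also have "\<dots> < 3 * (\<delta> / 4)" using K0[of k] K0[of "Suc k"] step.hyps by simp
    finally have "dist (pr k) (pr (Suc k)) < \<delta>" using \<delta> by simp
    then have "ereal (f1 (pr k) - f2 (pr k)) + g (pr k) = ereal (f1 (pr (Suc k)) - f2 (pr (Suc k))) + g (pr (Suc k))"
      using sepd[OF pr(1) pr(1)] by (meson not_le)
    then have "Fr (pr k) = Fr (pr (Suc k))" unfolding FeX[OF pr(1)] by simp
    then show ?case using step.IH by simp
  qed
  have upper: "Fr (x (Suc k)) \<le> zt + (L + l) / 2 * (dd k + bb * Dl k)\<^sup>2" if "k \<ge> K0" for k
  proof -
    have "Fr (T (y k)) + L / 2 * (norm (pr k - T (y k)))\<^sup>2 \<le> Fr (pr k) + (L + l) / 2 * (norm (pr k - y k))\<^sup>2"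
      by (rule K[OF Xs_sub(1)[OF pr(1)]])
    then have 1: "Fr (x (Suc k)) \<le> zt + (L + l) / 2 * (norm (pr k - y k))\<^sup>2"
      unfolding xs[symmetric] Fpr[OF that] by (smt (verit) zero_le_power2 mult_nonneg_nonneg Lpos divide_nonneg_pos)
    have "norm (pr k - y k) \<le> norm (pr k - x k) + norm (x k - y k)" by (rule norm_diff_triangle_le[of _ "x k"]) simp_all
    also have "\<dots> \<le> dd k + bb * Dl k"
      using pr(2)[of k] xy[of k] beta_le[of k] Dl_nn[of k]
      by (simp add: dist_norm norm_minus_commute mult_right_mono)
    finally have "(norm (pr k - y k))\<^sup>2 \<le> (dd k + bb * Dl k)\<^sup>2" by (intro power_mono) auto
    then have "(L + l) / 2 * (norm (pr k - y k))\<^sup>2 \<le> (L + l) / 2 * (dd k + bb * Dl k)\<^sup>2"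
      using Lpos lnn by (intro mult_left_mono) auto
    then show ?thesis using 1 by linarith
  qed
  have lower: "Fr (x k) \<ge> zt - l / 2 * (dd k)\<^sup>2" if "k \<ge> K0" for k
    using S_lower[OF pr(1)[of k] dom[of k]] Fpr[OF that] pr(2)[of k]
    by (simp add: dist_norm norm_minus_commute)
  have zz: "zt = \<zeta>"
  proof -
    have a: "(\<lambda>k. Fr (x (Suc k))) \<longlonglongrightarrow> \<zeta>"
    proof -
      have "(\<lambda>k. Hs (Suc k) - \<alpha> * (Dl (Suc k))\<^sup>2) \<longlonglongrightarrow> \<zeta> - \<alpha> * 0\<^sup>2"
        by (intro tendsto_intros LIMSEQ_Suc[OF Hl] LIMSEQ_Suc[OF Dl_lim])
      then show ?thesis by (simp add: Hs_def)
    qed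
    have b: "(\<lambda>k. Fr (x (Suc k))) \<longlonglongrightarrow> zt"
    proof (rule tendsto_sandwich)
      show "\<forall>\<^sub>F k in sequentially. zt - l / 2 * (dd (Suc k))\<^sup>2 \<le> Fr (x (Suc k))"
        unfolding eventually_sequentially by (intro exI[of _ K0] allI impI lower) simp
      show "\<forall>\<^sub>F k in sequentially. Fr (x (Suc k)) \<le> zt + (L + l) / 2 * (dd k + bb * Dl k)\<^sup>2"
        unfolding eventually_sequentially by (intro exI[of _ K0] allI impI upper)
      have "(\<lambda>k. zt - l / 2 * (dd (Suc k))\<^sup>2) \<longlonglongrightarrow> zt - l / 2 * 0\<^sup>2"
        by (intro tendsto_intros LIMSEQ_Suc[OF ddl])
      then show "(\<lambda>k. zt - l / 2 * (dd (Suc k))\<^sup>2) \<longlonglongrightarrow> zt" by simp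
      have "(\<lambda>k. zt + (L + l) / 2 * (dd k + bb * Dl k)\<^sup>2) \<longlonglongrightarrow> zt + (L + l) / 2 * (0 + bb * 0)\<^sup>2"
        by (intro tendsto_intros ddl Dl_lim)
      then show "(\<lambda>k. zt + (L + l) / 2 * (dd k + bb * Dl k)\<^sup>2) \<longlonglongrightarrow> zt" by simp
    qed
    show ?thesis using LIMSEQ_unique[OF b a] .
  qed
  obtain \<epsilon> \<tau> where e: "\<epsilon> > 0" "\<tau> > 0"
    and eb: "\<And>k. norm (T (x k) - x k) < \<epsilon> \<Longrightarrow> infdist (x k) Xs \<le> \<tau> * norm (T (x k) - x k)"
    by (rule errb_x) blast
  have "\<forall>\<^sub>F k in sequentially. norm (T (x k) - x k) < \<epsilon>" using r_lim e(1) by (rule order_tendstoD)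
  then obtain K1 where K1: "\<And>k. k \<ge> K1 \<Longrightarrow> norm (T (x k) - x k) < \<epsilon>"
    unfolding eventually_sequentially by blast
  define A where "A = \<tau> * cT * bb + bb"
  define C where "C = (L + l) * A\<^sup>2 + (L + l) * \<tau>\<^sup>2 + \<alpha>"
  define m0 where "m0 = min a0 b0"
  have m0: "m0 > 0" using a0 b0 by (simp add: m0_def)
  have alpha_pos: "\<alpha> > 0" using a0 alpha_nn unfolding a0_def
    by (smt (verit) Lpos lnn mult_nonneg_nonneg zero_le_power2 divide_nonneg_pos)
  have C0: "C > 0" unfolding C_def using alpha_pos Lpos lnn
    by (smt (verit) mult_nonneg_nonneg zero_le_power2)
  have A0: "A \<ge> 0" unfolding A_def using e cT_nn bb_nn by simp
  have step: "Hs (Suc k) - \<zeta> \<le> C / (m0 + C) * (Hs k - \<zeta>)" if k: "k \<ge> max K0 K1" for k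
  proof -
    define p where "p = Dl k"
    define q where "q = Dl (Suc k)"
    have p0: "p \<ge> 0" and q0: "q \<ge> 0" using Dl_nn by (auto simp: p_def q_def)
    have "dd k \<le> \<tau> * norm (T (x k) - x k)" unfolding dd_def using eb K1 k by simp
    also have "\<dots> \<le> \<tau> * (cT * bb * p + q)" using r_bound[of k] e by (simp add: p_def q_def)
    finally have ddk: "dd k + bb * p \<le> A * p + \<tau> * q" by (simp add: A_def algebra_simps)
    have s1: "(dd k + bb * p)\<^sup>2 \<le> (A * p + \<tau> * q)\<^sup>2" using ddk dd_nn[of k] bb_nn p0 by (intro power_mono) auto
    have s2: "(A * p + \<tau> * q)\<^sup>2 \<le> 2 * (A\<^sup>2 * p\<^sup>2) + 2 * (\<tau>\<^sup>2 * q\<^sup>2)"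
      using sum_squares_bound[of "A * p" "\<tau> * q"] by (simp add: power2_eq_square algebra_simps)
    have "Hs (Suc k) - \<zeta> = Fr (x (Suc k)) - zt + \<alpha> * q\<^sup>2" by (simp add: Hs_def q_def zz)
    also have "\<dots> \<le> (L + l) / 2 * (dd k + bb * p)\<^sup>2 + \<alpha> * q\<^sup>2" using upper[of k] k by (simp add: p_def)
    also have "\<dots> \<le> (L + l) / 2 * (2 * (A\<^sup>2 * p\<^sup>2) + 2 * (\<tau>\<^sup>2 * q\<^sup>2)) + \<alpha> * q\<^sup>2"
      using s1 s2 Lpos lnn by (intro add_right_mono mult_left_mono) auto
    also have "\<dots> = (L + l) * A\<^sup>2 * p\<^sup>2 + ((L + l) * \<tau>\<^sup>2 + \<alpha>) * q\<^sup>2" by (simp add: field_simps)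
    also have "\<dots> \<le> C * p\<^sup>2 + C * q\<^sup>2"
    proof -
      have "(L + l) * A\<^sup>2 \<le> C" "(L + l) * \<tau>\<^sup>2 + \<alpha> \<le> C" unfolding C_def using Lpos lnn alpha_pos by auto
      then show ?thesis by (intro add_mono mult_right_mono) auto
    qed
    finally have 1: "Hs (Suc k) - \<zeta> \<le> C * (p\<^sup>2 + q\<^sup>2)" by (simp add: algebra_simps)
    have "m0 * (p\<^sup>2 + q\<^sup>2) \<le> a0 * p\<^sup>2 + b0 * q\<^sup>2"
      unfolding distrib_left m0_def by (intro add_mono mult_right_mono) auto
    also have "\<dots> \<le> Hs k - Hs (Suc k)" using descent_H[of k] by (simp add: p_def q_def)
    finally have 2: "p\<^sup>2 + q\<^sup>2 \<le> (Hs k - Hs (Suc k)) / m0" using m0 by (simp add: field_simps)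
    have "Hs (Suc k) - \<zeta> \<le> C * ((Hs k - Hs (Suc k)) / m0)" using 1 2 C0 by (smt (verit) mult_left_mono)
    then have "m0 * (Hs (Suc k) - \<zeta>) \<le> C * (Hs k - Hs (Suc k))" using m0 by (simp add: field_simps)
    then have "(m0 + C) * (Hs (Suc k) - \<zeta>) \<le> C * (Hs k - \<zeta>)" by (simp add: algebra_simps)
    then show ?thesis using m0 C0 by (simp add: field_simps)
  qed
  show ?thesis
    unfolding Q_linear_convergent_def Q_linear_to_def
  proof (intro exI conjI)
    show "0 < C / (m0 + C)" using m0 C0 by simp
    show "C / (m0 + C) < 1" using m0 C0 by simp
    show "\<forall>k\<ge>max K0 K1. \<bar>Hs (Suc k) - \<zeta>\<bar> \<le> C / (m0 + C) * \<bar>Hs k - \<zeta>\<bar>"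
      using step Hge by (simp add: abs_of_nonneg)
  qed
qed

end

theorem lemma3p6:
  fixes g :: "'a::euclidean_space \<Rightarrow> ereal"
    and f1 f2 :: "'a \<Rightarrow> real"
    and df1 df2 :: "'a \<Rightarrow> 'a"
    and L l :: real
    and \<beta> :: "nat \<Rightarrow> real"
    and x :: "nat \<Rightarrow> 'a"
    and \<alpha> :: real
  defines "F \<equiv> \<lambda>z. ereal (f1 z - f2 z) + g z"
    and "Xs \<equiv> {z. \<exists>v\<in>subdiff g z. (df1 z - df2 z) + v = 0}"
    and "T \<equiv> \<lambda>z. prox (\<lambda>u. ereal (1 / L) * g u) (z - (1 / L) *\<^sub>R (df1 z - df2 z))"

    and "H \<equiv> \<lambda>k. f1 (x k) - f2 (x k) + real_of_ereal (g (x k))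
                 + \<alpha> * (norm (x k - (if k = 0 then x 0 else x (k - 1))))\<^sup>2"
  assumes g_proper: "proper_fun g" and g_closed: "closed_fun g" and g_convex: "convex_fun g"
    and f1_convex: "convex_on UNIV f1" and f2_convex: "convex_on UNIV f2"
    and df1: "\<And>z. GDERIV f1 z :> df1 z" and df2: "\<And>z. GDERIV f2 z :> df2 z"
    and L_pos: "L > 0" and l_nonneg: "l \<ge> 0" and L_ge_l: "L \<ge> l"
    and df1_lip: "L-lipschitz_on UNIV df1" and df2_lip: "l-lipschitz_on UNIV df2"
    and inf_finite: "(INF z. F z) > -\<infinity>"
    and inf_attained: "\<exists>z. \<forall>w. F z \<le> F w"
    and error_bound: "\<forall>\<xi>::real. ereal \<xi> \<ge> (INF z. F z) \<longrightarrow>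
        (\<exists>\<epsilon>>0. \<exists>\<tau>>0. \<forall>z. norm (T z - z) < \<epsilon> \<and> F z \<le> ereal \<xi> \<longrightarrow>
            infdist z Xs \<le> \<tau> * norm (T z - z))"
    and separation: "\<exists>\<delta>>0. \<forall>u\<in>Xs. \<forall>v\<in>Xs. F u \<noteq> F v \<longrightarrow> dist u v \<ge> \<delta>"
    and x0_dom: "x 0 \<in> eff_dom g"
    and beta_range: "\<And>k. 0 \<le> \<beta> k \<and> \<beta> k \<le> sqrt (L / (L + l))"
    and beta_bar: "(SUP k. \<beta> k) < sqrt (L / (L + l))"
    and iter: "\<And>k. x (Suc k) = T (x k + \<beta> k *\<^sub>R (x k - (if k = 0 then x 0 else x (k - 1))))"
    and alpha_range: "(L + l) / 2 * (SUP k. \<beta> k)\<^sup>2 < \<alpha>" "\<alpha> < L / 2"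
  shows "(\<lambda>k. infdist (x k) Xs) \<longlonglongrightarrow> 0 \<and> Q_linear_convergent H"
proof -
  interpret A: alg g f1 f2 df1 df2 L l
    by unfold_locales (simp_all add: g_proper g_closed g_convex f1_convex f2_convex df1 df2 L_pos l_nonneg df1_lip df2_lip)
  have Teq: "T = A.T" unfolding T_def by (rule ext) (simp add: A.T_def)
  have Xeq: "Xs = A.Xs" unfolding Xs_def A.Xs_def ..
  interpret B: algseq g f1 f2 df1 df2 L l \<beta> x \<alpha>
  proof unfold_locales
    show "g (x 0) < \<infinity>" using x0_dom by (simp add: eff_dom_def)
    show "\<And>k. 0 \<le> \<beta> k \<and> \<beta> k \<le> sqrt (L / (L + l))" by (rule beta_range)
    show "\<And>k. x (Suc k) = A.T (x k + \<beta> k *\<^sub>R (x k - (if k = 0 then x 0 else x (k - 1))))"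
      using iter unfolding Teq .
    show "(L + l) / 2 * (SUP k. \<beta> k)\<^sup>2 < \<alpha>" "\<alpha> < L / 2" by (rule alpha_range(1), rule alpha_range(2))
    show "\<exists>z. \<forall>w. ereal (f1 z - f2 z) + g z \<le> ereal (f1 w - f2 w) + g w"
      using inf_attained unfolding F_def .
    show "\<forall>\<xi>::real. ereal \<xi> \<ge> (INF z. ereal (f1 z - f2 z) + g z) \<longrightarrow>
        (\<exists>\<epsilon>>0. \<exists>\<tau>>0. \<forall>z. norm (A.T z - z) < \<epsilon> \<and> ereal (f1 z - f2 z) + g z \<le> ereal \<xi> \<longrightarrow>
            infdist z A.Xs \<le> \<tau> * norm (A.T z - z))"
      using error_bound unfolding F_def Teq Xeq .
    show "\<exists>\<delta>>0. \<forall>u\<in>A.Xs. \<forall>v\<in>A.Xs. ereal (f1 u - f2 u) + g u \<noteq> ereal (f1 v - f2 v) + g v \<longrightarrow> dist u v \<ge> \<delta>"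
      using separation unfolding F_def Xeq .
  qed
  have Heq: "H = B.Hs"
    unfolding H_def by (rule ext) (simp add: B.Hs_def A.Fr_def A.f_def A.gr_def B.Dl_def B.xp_def)
  show ?thesis using B.part1 B.part2 unfolding Heq Xeq by (simp add: B.dd_def)
qed

end
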